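(* Let $(X,d)$ be a totally bounded metric space with II-modulus of total boundedness $\gamma$, $\emptyset\ne F\subseteq X$ with representation $(\tilde F_k)$, $G,H:\mathbb{R}_+\to\mathbb{R}_+$ with $G$-modulus $\alpha_G$ and $H$-modulus $\beta_H$, and $(\varepsilon_n)$ a sequence in $\mathbb{R}_+$ with $\sum\varepsilon_i<\infty$ and Cauchy modulus $\xi$. Assume (1) $(x_n)$ is uniformly quasi-$(G,H)$-Fej\'er monotone w.r.t. $F$ (and $(\varepsilon_n)$) with modulus $\chi$, and (2) $(x_n)$ has the liminf property w.r.t. $F$ with liminf-bound $\widehat\Phi$. Then $(x_n)$ is Cauchy and for all $k\in\mathbb{N}$ and $g:\mathbb{N}\to\mathbb{N}$ there exists $N\le\widehat\Psi_0(P)$ such that $d(x_i,x_j)\le\frac1{k+1}$ for all $i,j\in[N,N+g(N)]$, where $P:=\gamma(\alpha_G(4\beta_H(2k+1)+3))+1$, $\chi_g(n,r):=\chi(n,g(n),r)$, $\chi^M_g(n,r):=\max\{\chi_g(i,r)\mid i\le n\}$, and $$\widehat\Psi_0(0):=0,\quad \widehat\Psi_0(n+1):=\widehat\Phi\Big(\chi^M_g\big(\widehat\Psi_0(n),4\beta_H(2k+1)+3\big),\ \xi(4\beta_H(2k+1)+3)\Big).$$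
   Context: II-modulus $\gamma$: for every $k$ and every sequence $(y_n)$ in $X$ there are $0\le i<j\le\gamma(k)$ with $d(y_i,y_j)\le\frac1{k+1}$. Representation: $F=\bigcap_k\tilde F_k$, $AF_k:=\bigcap_{l\le k}\tilde F_l$. $G$-modulus: $a\le\frac1{\alpha_G(k)+1}\Rightarrow G(a)\le\frac1{k+1}$; $H$-modulus: $H(a)\le\frac1{\beta_H(k)+1}\Rightarrow a\le\frac1{k+1}$. Cauchy modulus $\xi$: $\sum_{i=\xi(n)}^\infty\varepsilon_i<\frac1{n+1}$ for all $n$. Uniformly quasi-$(G,H)$-Fej\'er monotone with modulus $\chi:\mathbb{N}^3\to\mathbb{N}$: for all $n,m,r\in\mathbb{N}$, all $p\in AF_{\chi(n,m,r)}$ and all $l\le m$, $H(d(x_{n+l},p))<G(d(x_n,p))+\sum_{i=n}^{n+m-1}\varepsilon_i+\frac1{r+1}$. Liminf property w.r.t. $F$: for all $k,n$ there is $N\ge n$ with $x_N\in AF_k$; then $\widehat\varphi_F(k,n):=\min\{m\ge n\mid x_m\in AF_k\}$, and a liminf-bound is any $\widehat\Phi:\mathbb{N}^2\to\mathbb{N}$, monotone in both arguments, with $\widehat\Phi\ge\widehat\varphi_F$ pointwise. *)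

theory Defs
  imports "HOL-Analysis.Analysis"
begin

definition II_modulus :: "(nat \<Rightarrow> nat) \<Rightarrow> ('a::metric_space) itself \<Rightarrow> bool" where
  "II_modulus \<gamma> _ \<longleftrightarrow> (\<forall>k (y::nat \<Rightarrow> 'a). \<exists>i j. i < j \<and> j \<le> \<gamma> k \<and> dist (y i) (y j) \<le> 1 / (real k + 1))"

definition AF :: "(nat \<Rightarrow> 'a set) \<Rightarrow> nat \<Rightarrow> 'a set" where
  "AF Ft k = (\<Inter>l\<in>{..k}. Ft l)"

definition G_modulus :: "(real \<Rightarrow> real) \<Rightarrow> (nat \<Rightarrow> nat) \<Rightarrow> bool" where
  "G_modulus G \<alpha> \<longleftrightarrow> (\<forall>k a. 0 \<le> a \<longrightarrow> a \<le> 1 / (real (\<alpha> k) + 1) \<longrightarrow> G a \<le> 1 / (real k + 1))"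

definition H_modulus :: "(real \<Rightarrow> real) \<Rightarrow> (nat \<Rightarrow> nat) \<Rightarrow> bool" where
  "H_modulus H \<beta> \<longleftrightarrow> (\<forall>k a. 0 \<le> a \<longrightarrow> H a \<le> 1 / (real (\<beta> k) + 1) \<longrightarrow> a \<le> 1 / (real k + 1))"

definition cauchy_modulus_series :: "(nat \<Rightarrow> real) \<Rightarrow> (nat \<Rightarrow> nat) \<Rightarrow> bool" where
  "cauchy_modulus_series \<epsilon> \<xi> \<longleftrightarrow> (\<forall>n. (\<Sum>i. \<epsilon> (i + \<xi> n)) < 1 / (real n + 1))"

definition unif_quasi_GH_fejer ::
  "(nat \<Rightarrow> 'a::metric_space) \<Rightarrow> (nat \<Rightarrow> 'a set) \<Rightarrow> (real \<Rightarrow> real) \<Rightarrow> (real \<Rightarrow> real)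
   \<Rightarrow> (nat \<Rightarrow> real) \<Rightarrow> (nat \<Rightarrow> nat \<Rightarrow> nat \<Rightarrow> nat) \<Rightarrow> bool" where
  "unif_quasi_GH_fejer x Ft G H \<epsilon> chi \<longleftrightarrow>
     (\<forall>n m r p l. p \<in> AF Ft (chi n m r) \<longrightarrow> l \<le> m \<longrightarrow>
        H (dist (x (n + l)) p) < G (dist (x n) p) + (\<Sum>i\<in>{n..<n+m}. \<epsilon> i) + 1 / (real r + 1))"

definition liminf_property :: "(nat \<Rightarrow> 'a) \<Rightarrow> (nat \<Rightarrow> 'a set) \<Rightarrow> bool" where
  "liminf_property x Ft \<longleftrightarrow> (\<forall>k n. \<exists>N\<ge>n. x N \<in> AF Ft k)"

definition varphi_hat :: "(nat \<Rightarrow> 'a) \<Rightarrow> (nat \<Rightarrow> 'a set) \<Rightarrow> nat \<Rightarrow> nat \<Rightarrow> nat" where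
  "varphi_hat x Ft k n = (LEAST m. n \<le> m \<and> x m \<in> AF Ft k)"

definition liminf_bound :: "(nat \<Rightarrow> 'a) \<Rightarrow> (nat \<Rightarrow> 'a set) \<Rightarrow> (nat \<Rightarrow> nat \<Rightarrow> nat) \<Rightarrow> bool" where
  "liminf_bound x Ft \<Phi> \<longleftrightarrow>
     (\<forall>k k' n n'. k \<le> k' \<longrightarrow> n \<le> n' \<longrightarrow> \<Phi> k n \<le> \<Phi> k' n') \<and>
     (\<forall>k n. varphi_hat x Ft k n \<le> \<Phi> k n)"

definition chiM :: "(nat \<Rightarrow> nat \<Rightarrow> nat \<Rightarrow> nat) \<Rightarrow> (nat \<Rightarrow> nat) \<Rightarrow> nat \<Rightarrow> nat \<Rightarrow> nat" where
  "chiM chi g n r = Max ((\<lambda>i. chi i (g i) r) ` {..n})"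

text \<open>Psi0 with the parameter K standing for 4 * beta_H(2k+1) + 3.\<close>
primrec Psi0 :: "(nat \<Rightarrow> nat \<Rightarrow> nat) \<Rightarrow> (nat \<Rightarrow> nat \<Rightarrow> nat \<Rightarrow> nat) \<Rightarrow> (nat \<Rightarrow> nat)
    \<Rightarrow> (nat \<Rightarrow> nat) \<Rightarrow> nat \<Rightarrow> nat \<Rightarrow> nat" where
  "Psi0 \<Phi> chi g \<xi> K 0 = 0"
| "Psi0 \<Phi> chi g \<xi> K (Suc n) = \<Phi> (chiM chi g (Psi0 \<Phi> chi g \<xi> K n) K) (\<xi> K)"

end

theory Submission
  imports Defs
begin

lemma AF_anti: "k \<le> k' \<Longrightarrow> AF Ft k' \<subseteq> AF Ft k"
  unfolding AF_def by auto

lemma chiM_ge: "N \<le> n \<Longrightarrow> chi N (g N) r \<le> chiM chi g n r"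
  unfolding chiM_def by (rule Max_ge) auto

lemma chiM_mono: "n \<le> n' \<Longrightarrow> chiM chi g n r \<le> chiM chi g n' r"
  unfolding chiM_def by (rule Max_mono) auto

lemma Psi0_mono_Suc:
  assumes "\<forall>k k' n n'. k \<le> k' \<longrightarrow> n \<le> n' \<longrightarrow> \<Phi> k n \<le> \<Phi> k' n'"
  shows "Psi0 \<Phi> chi g \<xi> K n \<le> Psi0 \<Phi> chi g \<xi> K (Suc n)"
proof (induction n)
  case 0 then show ?case by simp
next
  case (Suc n)
  have "chiM chi g (Psi0 \<Phi> chi g \<xi> K n) K \<le> chiM chi g (Psi0 \<Phi> chi g \<xi> K (Suc n)) K"
    using Suc chiM_mono by blast
  then show ?case using assms by simp
qed

lemma Psi0_mono:
  assumes "\<forall>k k' n n'. k \<le> k' \<longrightarrow> n \<le> n' \<longrightarrow> \<Phi> k n \<le> \<Phi> k' n'"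
  shows "mono (Psi0 \<Phi> chi g \<xi> K)"
  using Psi0_mono_Suc[OF assms] by (simp add: incseq_SucI)

lemma tail_sum:
  fixes \<epsilon> :: "nat \<Rightarrow> real"
  assumes nn: "\<And>n. 0 \<le> \<epsilon> n" and s: "summable \<epsilon>" and N: "a \<le> N"
  shows "(\<Sum>i\<in>{N..<N+M}. \<epsilon> i) \<le> (\<Sum>i. \<epsilon> (i + a))"
proof -
  have "(\<Sum>i\<in>{N..<N+M}. \<epsilon> i) \<le> (\<Sum>i\<in>{a..<N+M}. \<epsilon> i)"
    by (rule sum_mono2) (use N nn in auto)
  also have "\<dots> = (\<Sum>i<N+M-a. \<epsilon> (i + a))"
  proof -
    have "{a..<N+M} = (\<lambda>i. i + a) ` {..<N+M-a}"
    proof (intro set_eqI iffI)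
      fix y assume y: "y \<in> {a..<N+M}"
      then have "y = (y - a) + a" "y - a \<in> {..<N+M-a}" using N by auto
      then show "y \<in> (\<lambda>i. i + a) ` {..<N+M-a}" by blast
    qed (use N in auto)
    then show ?thesis by (simp add: sum.reindex)
  qed
  also have "\<dots> \<le> (\<Sum>i. \<epsilon> (i + a))"
    by (rule sum_le_suminf) (use s nn in \<open>auto simp: summable_iff_shift\<close>)
  finally show ?thesis .
qed

theorem theorem6p4:
  fixes x :: "nat \<Rightarrow> 'a::metric_space"
    and \<gamma> :: "nat \<Rightarrow> nat"
    and F :: "'a set" and Ft :: "nat \<Rightarrow> 'a set"
    and G H :: "real \<Rightarrow> real" and \<alpha>G \<beta>H :: "nat \<Rightarrow> nat"
    and \<epsilon> :: "nat \<Rightarrow> real" and \<xi> :: "nat \<Rightarrow> nat"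
    and chi :: "nat \<Rightarrow> nat \<Rightarrow> nat \<Rightarrow> nat" and \<Phi> :: "nat \<Rightarrow> nat \<Rightarrow> nat"
  assumes gamma: "II_modulus \<gamma> TYPE('a)"
    and F_ne: "F \<noteq> {}"
    and F_rep: "F = (\<Inter>k. Ft k)"
    and G_nonneg: "\<And>a. 0 \<le> a \<Longrightarrow> 0 \<le> G a"
    and H_nonneg: "\<And>a. 0 \<le> a \<Longrightarrow> 0 \<le> H a"
    and alphaG: "G_modulus G \<alpha>G"
    and betaH: "H_modulus H \<beta>H"
    and eps_nonneg: "\<And>n. 0 \<le> \<epsilon> n"
    and eps_summable: "summable \<epsilon>"
    and xi: "cauchy_modulus_series \<epsilon> \<xi>"
    and fejer: "unif_quasi_GH_fejer x Ft G H \<epsilon> chi"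
    and liminf: "liminf_property x Ft"
    and Phi: "liminf_bound x Ft \<Phi>"
  shows "Cauchy x \<and>
    (\<forall>(k::nat) (g::nat \<Rightarrow> nat).
       \<exists>N \<le> Psi0 \<Phi> chi g \<xi> (4 * \<beta>H (2 * k + 1) + 3) (\<gamma> (\<alpha>G (4 * \<beta>H (2 * k + 1) + 3)) + 1).
         \<forall>i j. N \<le> i \<longrightarrow> i \<le> N + g N \<longrightarrow> N \<le> j \<longrightarrow> j \<le> N + g N \<longrightarrow>
           dist (x i) (x j) \<le> 1 / (real k + 1))"
proof -
  have Phimono: "\<forall>k k' n n'. k \<le> k' \<longrightarrow> n \<le> n' \<longrightarrow> \<Phi> k n \<le> \<Phi> k' n'"
    and Phibd: "\<And>k n. varphi_hat x Ft k n \<le> \<Phi> k n"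
    using Phi unfolding liminf_bound_def by auto
  have meta: "\<exists>N \<le> Psi0 \<Phi> chi g \<xi> (4 * \<beta>H (2 * k + 1) + 3) (\<gamma> (\<alpha>G (4 * \<beta>H (2 * k + 1) + 3)) + 1).
         \<forall>i j. N \<le> i \<longrightarrow> i \<le> N + g N \<longrightarrow> N \<le> j \<longrightarrow> j \<le> N + g N \<longrightarrow>
           dist (x i) (x j) \<le> 1 / (real k + 1)" for k g
  proof -
    define K where "K = 4 * \<beta>H (2 * k + 1) + 3"
    define \<psi> where "\<psi> = Psi0 \<Phi> chi g \<xi> K"
    define m where "m n = varphi_hat x Ft (chiM chi g (\<psi> n) K) (\<xi> K)" for n
    have mprop: "\<xi> K \<le> m n \<and> x (m n) \<in> AF Ft (chiM chi g (\<psi> n) K)" for n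
    proof -
      have "\<exists>N. \<xi> K \<le> N \<and> x N \<in> AF Ft (chiM chi g (\<psi> n) K)"
        using liminf unfolding liminf_property_def by blast
      then show ?thesis unfolding m_def varphi_hat_def by (rule LeastI_ex)
    qed
    have mle: "m n \<le> \<psi> (Suc n)" for n
      using Phibd unfolding m_def \<psi>_def by simp
    have \<psi>mono: "mono \<psi>" unfolding \<psi>_def by (rule Psi0_mono[OF Phimono])
    obtain i j where ij: "i < j" "j \<le> \<gamma> (\<alpha>G K)"
      and dij: "dist (x (m i)) (x (m j)) \<le> 1 / (real (\<alpha>G K) + 1)"
      using gamma[unfolded II_modulus_def, rule_format, of "\<alpha>G K" "\<lambda>n. x (m n)"] by blast
    define N where "N = m i"
    have "N \<le> \<psi> (Suc i)" using mle N_def by simp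
    also have "\<psi> (Suc i) \<le> \<psi> j" using \<psi>mono ij(1) by (simp add: monoD)
    finally have Nj: "N \<le> \<psi> j" .
    have Nbound: "N \<le> \<psi> (\<gamma> (\<alpha>G K) + 1)"
    proof -
      have "\<psi> j \<le> \<psi> (\<gamma> (\<alpha>G K) + 1)" using \<psi>mono ij(2) by (simp add: monoD)
      then show ?thesis using Nj by linarith
    qed
    define p where "p = x (m j)"
    have pin: "p \<in> AF Ft (chi N (g N) K)"
      using mprop[of j] AF_anti[OF chiM_ge[OF Nj, of chi g K], of Ft] unfolding p_def by blast
    have Gb: "G (dist (x N) p) \<le> 1 / (real K + 1)"
      using alphaG dij unfolding G_modulus_def N_def p_def by simp
    have Sb: "(\<Sum>i\<in>{N..<N+g N}. \<epsilon> i) < 1 / (real K + 1)"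
      using tail_sum[OF eps_nonneg eps_summable, of "\<xi> K" N "g N"] mprop[of i] xi
      unfolding cauchy_modulus_series_def N_def by (meson order.strict_trans1)
    have close: "dist (x i') p \<le> 1 / (2 * real k + 2)" if a12: "N \<le> i'" "i' \<le> N + g N" for i'
    proof -
      obtain l where l: "i' = N + l" "l \<le> g N" 
      proof
        show "i' = N + (i' - N)" "i' - N \<le> g N" using a12 by auto
      qed
      have "H (dist (x (N + l)) p) < G (dist (x N) p) + (\<Sum>i\<in>{N..<N+g N}. \<epsilon> i) + 1 / (real K + 1)"
        using fejer pin l(2) unfolding unif_quasi_GH_fejer_def by blast
      also have "\<dots> < 3 / (real K + 1)" using Gb Sb by simp
      also have "\<dots> \<le> 1 / (real (\<beta>H (2 * k + 1)) + 1)"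
        unfolding K_def by (simp add: field_simps)
      finally have "H (dist (x (N + l)) p) \<le> 1 / (real (\<beta>H (2 * k + 1)) + 1)" by simp
      then have "dist (x (N + l)) p \<le> 1 / (real (2 * k + 1) + 1)"
        using betaH[unfolded H_modulus_def, rule_format, of "dist (x (N + l)) p" "2 * k + 1"] by simp
      then show ?thesis using l by (simp add: add_ac)
    qed
    have "\<forall>i j. N \<le> i \<longrightarrow> i \<le> N + g N \<longrightarrow> N \<le> j \<longrightarrow> j \<le> N + g N \<longrightarrow>
           dist (x i) (x j) \<le> 1 / (real k + 1)"
    proof (intro allI impI)
      fix i' j' assume "N \<le> i'" "i' \<le> N + g N" "N \<le> j'" "j' \<le> N + g N"
      then have "dist (x i') (x j') \<le> dist (x i') p + dist (x j') p"
        and "dist (x i') p \<le> 1 / (2 * real k + 2)" "dist (x j') p \<le> 1 / (2 * real k + 2)"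
        using close dist_triangle2 by auto
      then have "dist (x i') (x j') \<le> 2 / (2 * real k + 2)" by simp
      also have "\<dots> = 1 / (real k + 1)" by (simp add: field_simps)
      finally show "dist (x i') (x j') \<le> 1 / (real k + 1)" .
    qed
    then show ?thesis using Nbound unfolding \<psi>_def K_def by blast
  qed
  have "Cauchy x"
  proof (rule ccontr)
    assume "\<not> Cauchy x"
    then obtain e where e: "e > 0" "\<forall>M. \<exists>a\<ge>M. \<exists>b\<ge>M. \<not> dist (x a) (x b) < e"
      unfolding Cauchy_def by blast
    obtain k :: nat where k: "1 / (real k + 1) < e"
      using e(1) by (metis nat_approx_posE of_nat_Suc add.commute)
    define g where "g M = (SOME t. \<exists>a b. M \<le> a \<and> a \<le> M + t \<and> M \<le> b \<and> b \<le> M + t \<and> \<not> dist (x a) (x b) < e)" for M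
    have gP: "\<exists>a b. M \<le> a \<and> a \<le> M + g M \<and> M \<le> b \<and> b \<le> M + g M \<and> \<not> dist (x a) (x b) < e" for M
    proof -
      obtain a b where "a \<ge> M" "b \<ge> M" "\<not> dist (x a) (x b) < e" using e(2) by blast
      then have "\<exists>t a b. M \<le> a \<and> a \<le> M + t \<and> M \<le> b \<and> b \<le> M + t \<and> \<not> dist (x a) (x b) < e"
        by (intro exI[of _ "a + b"] exI[of _ a] exI[of _ b]) auto
      then show ?thesis unfolding g_def by (rule someI_ex)
    qed
    obtain N where "\<forall>i j. N \<le> i \<longrightarrow> i \<le> N + g N \<longrightarrow> N \<le> j \<longrightarrow> j \<le> N + g N \<longrightarrow>
           dist (x i) (x j) \<le> 1 / (real k + 1)" using meta[where k=k and g=g] by blast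
    moreover obtain a b where "N \<le> a \<and> a \<le> N + g N \<and> N \<le> b \<and> b \<le> N + g N \<and> \<not> dist (x a) (x b) < e"
      using gP[of N] by blast
    ultimately have "dist (x a) (x b) \<le> 1 / (real k + 1)" "\<not> dist (x a) (x b) < e" by auto
    then show False using k by linarith
  qed
  then show ?thesis using meta by blast
qed

end
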